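(* Write $\hat B_n(x)=\sum_{k=0}^n\hat B(n,k)x^k$ and set $\hat B(n,k)=0$ for $k<0$ or $k>n$. Then $\hat B(n,0)=S_n$ for $n\ge1$, and for all $n\ge1$ and all integers $k$, $$\hat B(n+1,k)=(n+1-k)\big(\hat B(n,k)+\hat B(n,k-2)\big)+k\big(\hat B(n,k+1)+\hat B(n,k-1)\big)+\hat B(n,k+1)+\hat B(n,k-2).$$
   Context: $\mathcal B_n$ is the set of signed permutations (bijections $\sigma$ of $\{\pm1,\dots,\pm n\}$ with $\sigma(-i)=-\sigma(i)$), written as words $\sigma(1)\cdots\sigma(n)$ with $\sigma(0)=0$. An index $i\in\{0\}\cup[n-1]$ is an alternating descent of $\sigma$ if either $\sigma(i)<\sigma(i+1)$ and $i$ is even, or $\sigma(i)>\sigma(i+1)$ and $i$ is odd; $\hat B_n(x)=\sum_{\sigma\in\mathcal B_n}x^{\hat d_B(\sigma)}$ with $\hat d_B(\sigma)$ the number of alternating descents. $S_n$ is the number of snakes: $\tau\in\mathcal B_n$ with $\tau(1)>\tau(2)<\tau(3)>\cdots$ and $\tau(1)>0$; its exponential generating function is $1+\sum_{n>0}S_nx^n/n!=1/(\cos x-\sin x)$. *)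

theory Defs
  imports Main
begin

text \<open>Signed permutations of [n], represented as functions on int that are
  bijections of {-n..n}-{0}, odd (sigma(-i) = -sigma(i), hence sigma(0)=0),
  and the identity outside {-n..n}.\<close>
definition signed_perms :: "nat \<Rightarrow> (int \<Rightarrow> int) set" where
  "signed_perms n = {\<sigma>. bij_betw \<sigma> ({- int n..int n} - {0}) ({- int n..int n} - {0})
      \<and> (\<forall>i. \<sigma> (- i) = - \<sigma> i)
      \<and> (\<forall>i. i \<notin> {- int n..int n} \<longrightarrow> \<sigma> i = i)}"

definition is_alt_des :: "(int \<Rightarrow> int) \<Rightarrow> nat \<Rightarrow> bool" where
  "is_alt_des \<sigma> i \<longleftrightarrow> (even i \<and> \<sigma> (int i) < \<sigma> (int i + 1)) \<or> (odd i \<and> \<sigma> (int i) > \<sigma> (int i + 1))"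

definition alt_des_B :: "nat \<Rightarrow> (int \<Rightarrow> int) \<Rightarrow> nat" where
  "alt_des_B n \<sigma> = card {i \<in> {0..<n}. is_alt_des \<sigma> i}"

text \<open>Coefficient of x^k in hat B_n(x); automatically 0 for k<0 or k>n.\<close>
definition Bhat :: "nat \<Rightarrow> int \<Rightarrow> int" where
  "Bhat n k = int (card {\<sigma> \<in> signed_perms n. int (alt_des_B n \<sigma>) = k})"

definition snakes :: "nat \<Rightarrow> (int \<Rightarrow> int) set" where
  "snakes n = {\<tau> \<in> signed_perms n. \<tau> 1 > 0 \<and>
      (\<forall>i. 1 \<le> i \<and> i < n \<longrightarrow>
         (odd i \<longrightarrow> \<tau> (int i) > \<tau> (int i + 1)) \<and> (even i \<longrightarrow> \<tau> (int i) < \<tau> (int i + 1)))}"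

definition S_num :: "nat \<Rightarrow> int" where
  "S_num n = int (card (snakes n))"

end

theory Submission
  imports Defs
begin

fun cnt :: "int list \<Rightarrow> nat" where
  "cnt (a # b # r) = (if a + b < 0 then 1 else 0) + cnt (b # r)"
| "cnt _ = 0"

lemma cnt_snoc: "cnt (xs @ [y]) = cnt xs + (if xs = [] then 0 else if last xs + y < 0 then 1 else 0)"
  by (induction xs rule: cnt.induct) auto

lemma cnt_app: "cnt (xs @ y # ys) = cnt (xs @ [y]) + cnt (y # ys)"
  by (induction xs rule: cnt.induct) (auto simp: Cons_eq_append_conv)

lemma cnt_sum: "int (cnt ys) = (\<Sum>i<length ys - 1. if ys!i + ys!Suc i < 0 then 1 else 0)"
proof (induction ys rule: cnt.induct)
  case (1 a b r)
  show ?case using 1 by (simp add: sum.lessThan_Suc_shift del: sum.lessThan_Suc)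
qed auto

lemma cnt_mid:
  assumes "0 < q" "q < length ys" "\<forall>y\<in>set ys. \<bar>y\<bar> < \<bar>x\<bar>"
  shows "int (cnt (take q ys @ x # drop q ys)) = int (cnt ys)
     - (if ys!(q-1) + ys!q < 0 then 1 else 0) + (if x < 0 then 2 else 0)"
proof -
  define A where "A = take q ys"
  define B where "B = drop q ys"
  have A0: "A \<noteq> []" using assms by (auto simp: A_def)
  have A: "A \<noteq> []" "last A = ys!(q-1)" using assms A0 by (auto simp: A_def last_conv_nth min_def)
  have B: "B = ys!q # tl B" using assms by (simp add: B_def Cons_nth_drop_Suc[symmetric] drop_Suc tl_drop)
  have ys: "ys = A @ ys!q # tl B" using B by (metis A_def B_def append_take_drop_id)
  have xa: "last A \<in> set ys" "ys!q \<in> set ys" using assms A by (auto simp: A_def)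
  have "cnt ys = cnt A + (if last A + ys!q < 0 then 1 else 0) + cnt (ys!q # tl B)"
    by (subst ys, subst cnt_app) (simp add: cnt_snoc A)
  moreover have "cnt (A @ x # B) = cnt A + (if last A + x < 0 then 1 else 0)
     + (if x + ys!q < 0 then 1 else 0) + cnt (ys!q # tl B)"
    by (subst cnt_app, subst B) (simp add: cnt_snoc A)
  moreover have "(last A + x < 0) = (x < 0)" "(x + ys!q < 0) = (x < 0)"
    using assms(3) xa by fastforce+
  ultimately show ?thesis using A by (simp add: A_def B_def)
qed

lemma cnt_end:
  assumes "ys \<noteq> []" "\<forall>y\<in>set ys. \<bar>y\<bar> < \<bar>x\<bar>"
  shows "int (cnt (ys @ [x])) = int (cnt ys) + (if x < 0 then 1 else 0)"
proof -
  have "last ys \<in> set ys" using assms by simp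
  then have "(last ys + x < 0) = (x < 0)" using assms by fastforce
  then show ?thesis using assms by (simp add: cnt_snoc)
qed

definition SL :: "nat \<Rightarrow> int list set" where
  "SL n = {zs. length zs = n \<and> distinct (map abs zs) \<and> set (map abs zs) = {1..int n}}"

definition ins :: "int list \<Rightarrow> nat \<Rightarrow> int \<Rightarrow> int list" where
  "ins zs p x = take p zs @ x # drop p zs"

lemma SL_abs: "zs \<in> SL n \<Longrightarrow> y \<in> set zs \<Longrightarrow> 1 \<le> \<bar>y\<bar> \<and> \<bar>y\<bar> \<le> int n"
  unfolding SL_def by (metis (mono_tags, lifting) atLeastAtMost_iff image_eqI list.set_map mem_Collect_eq)

lemma finite_SL: "finite (SL n)"
proof -
  have "SL n \<subseteq> {xs. set xs \<subseteq> {-int n..int n} \<and> length xs = n}"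
    using SL_abs by (fastforce simp: SL_def[of n] abs_le_iff)
  then show ?thesis by (rule finite_subset) (simp add: finite_lists_length_eq)
qed

lemma dist_ins: "distinct (take p L @ a # drop p L) \<longleftrightarrow> distinct L \<and> a \<notin> set L"
proof -
  obtain A B where "take p L = A" "drop p L = B" by simp
  moreover have "L = A @ B" using calculation append_take_drop_id by metis
  ultimately show ?thesis by auto
qed

lemma set_ins: "set (take p L @ a # drop p L) = insert a (set L)"
proof -
  obtain A B where "take p L = A" "drop p L = B" by simp
  moreover have "L = A @ B" using calculation append_take_drop_id by metis
  ultimately show ?thesis by auto
qed

lemma map_ins: "map f (ins zs p x) = take p (map f zs) @ f x # drop p (map f zs)"
  by (simp add: ins_def take_map drop_map)

lemma SL_ins:
  assumes "zs \<in> SL n" "p \<le> n" "\<bar>x\<bar> = int n + 1"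
  shows "ins zs p x \<in> SL (Suc n)"
proof -
  have d: "distinct (map abs zs)" and st: "set (map abs zs) = {1..int n}" and l: "length zs = n"
    using assms by (auto simp: SL_def)
  have nin: "\<bar>x\<bar> \<notin> set (map abs zs)" using st assms by auto
  have "distinct (map abs (ins zs p x))" using nin d by (simp only: map_ins dist_ins) simp
  moreover have "set (map abs (ins zs p x)) = {1..int (Suc n)}"
  proof -
    have "set (map abs (ins zs p x)) = insert \<bar>x\<bar> (set (map abs zs))"
      by (simp only: map_ins set_ins)
    then show ?thesis using st assms by auto
  qed
  moreover have "length (ins zs p x) = Suc n" using l assms by (simp add: ins_def)
  ultimately show ?thesis by (simp add: SL_def)
qed

lemma SL_surj:
  assumes "ys \<in> SL (Suc n)"
  shows "\<exists>zs p s. zs \<in> SL n \<and> p < Suc n \<and> s \<in> {1,-1} \<and> ys = ins zs p (s * (int n + 1))"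
proof -
  have d: "distinct (map abs ys)" and st: "set (map abs ys) = {1..int n + 1}" and l: "length ys = Suc n"
    using assms by (auto simp: SL_def)
  have "int n + 1 \<in> set (map abs ys)" using st by simp
  then obtain p where "p < length (map abs ys)" "(map abs ys)!p = int n + 1"
    unfolding in_set_conv_nth by blast
  then have p: "p < Suc n" "\<bar>ys!p\<bar> = int n + 1" using l by auto
  define zs where "zs = take p ys @ drop (Suc p) ys"
  define s where "s = (if ys!p < 0 then -1 else 1::int)"
  have ysp: "ys!p = s * (int n + 1)" using p by (auto simp: s_def abs_if)
  have yeq: "ys = ins zs p (s * (int n + 1))"
    using p l ysp id_take_nth_drop[of p ys] by (simp add: ins_def zs_def min_def)
  have mz: "map abs ys = take p (map abs zs) @ \<bar>ys!p\<bar> # drop p (map abs zs)"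
    using yeq ysp map_ins[of abs zs p "s * (int n + 1)"] by simp
  have lz: "length zs = n" using l p by (simp add: zs_def min_def)
  have dz: "distinct (map abs zs)" and nz: "\<bar>ys!p\<bar> \<notin> set (map abs zs)"
    using d mz dist_ins[of p "map abs zs" "\<bar>ys!p\<bar>"] by auto
  have "set (map abs ys) = insert \<bar>ys!p\<bar> (set (map abs zs))"
    using mz set_ins[of p "map abs zs" "\<bar>ys!p\<bar>"] by simp
  then have "insert (int n + 1) (set (map abs zs)) = {1..int n + 1}" using st p by simp
  moreover have nz2: "int n + 1 \<notin> set (map abs zs)" using nz unfolding p(2) .
  ultimately have "set (map abs zs) = {1..int n + 1} - {int n + 1}"
    using Diff_insert_absorb[OF nz2] by simp
  also have "\<dots> = {1..int n}" by auto
  finally have "set (map abs zs) = {1..int n}" .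
  then have "zs \<in> SL n" using lz dz by (simp add: SL_def)
  moreover have "s \<in> {1,-1}" by (simp add: s_def)
  ultimately show ?thesis using p yeq by blast
qed

lemma ins_inj:
  assumes "zs \<in> SL n" "zs' \<in> SL n" "p < Suc n" "p' < Suc n" "s \<in> {1,-1}" "s' \<in> {1,-1}"
    "ins zs p (s * (int n + 1)) = ins zs' p' (s' * (int n + 1))"
  shows "zs = zs' \<and> p = p' \<and> s = s'"
proof -
  define ys where "ys = ins zs p (s * (int n + 1))"
  have Y: "ys \<in> SL (Suc n)" using SL_ins[OF assms(1), of p "s * (int n + 1)"] assms(3,5)
    by (auto simp: ys_def abs_mult)
  have l: "length zs = n" "length zs' = n" using assms by (auto simp: SL_def)
  have yp: "ys!p = s * (int n + 1)" using l assms(3) by (simp add: ys_def ins_def nth_append min_def)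
  have yp': "ys!p' = s' * (int n + 1)" using l assms(4) unfolding ys_def assms(7)
    by (simp add: ins_def nth_append min_def)
  have d: "distinct (map abs ys)" "length ys = Suc n" using Y by (auto simp: SL_def)
  have e1: "(map abs ys)!p = int n + 1" using yp d(2) assms(3,5) by (auto simp: abs_mult)
  have e2: "(map abs ys)!p' = int n + 1" using yp' d(2) assms(4,6) by (auto simp: abs_mult)
  have pp: "p = p'" using nth_eq_iff_index_eq[OF d(1), of p p'] d(2) assms(3,4) e1 e2 by simp
  then have ss: "s = s'" using yp yp' by simp
  have "zs = take p ys @ drop (Suc p) ys" using l assms(3) by (simp add: ys_def ins_def)
  moreover have "zs' = take p' ys @ drop (Suc p') ys" using l assms(4) unfolding ys_def assms(7)
    by (simp add: ins_def)
  ultimately show ?thesis using pp ss by simp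
qed

definition stat :: "int list \<Rightarrow> int" where "stat zs = int (cnt (0 # zs))"

lemma SL_lt: "zs \<in> SL n \<Longrightarrow> \<bar>x\<bar> = int n + 1 \<Longrightarrow> \<forall>y\<in>set (0 # zs). \<bar>y\<bar> < \<bar>x\<bar>"
  using SL_abs by fastforce

lemma stat_mid:
  assumes "zs \<in> SL n" "p < n" "\<bar>x\<bar> = int n + 1"
  shows "stat (ins zs p x) = stat zs - (if (0#zs)!p + zs!p < 0 then 1 else 0) + (if x < 0 then 2 else 0)"
proof -
  have l: "length zs = n" using assms by (simp add: SL_def)
  have "0 # ins zs p x = take (Suc p) (0#zs) @ x # drop (Suc p) (0#zs)" by (simp add: ins_def)
  then show ?thesis unfolding stat_def
    using cnt_mid[of "Suc p" "0#zs" x] SL_lt[OF assms(1,3)] assms(2) l by simp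
qed

lemma stat_end:
  assumes "zs \<in> SL n" "\<bar>x\<bar> = int n + 1"
  shows "stat (ins zs n x) = stat zs + (if x < 0 then 1 else 0)"
proof -
  have l: "length zs = n" using assms by (simp add: SL_def)
  have "0 # ins zs n x = (0#zs) @ [x]" using l by (simp add: ins_def)
  then show ?thesis unfolding stat_def
    using cnt_end[of "0#zs" x] SL_lt[OF assms] by simp
qed

lemma stat_sum: "zs \<in> SL n \<Longrightarrow> stat zs = (\<Sum>p<n. if (0#zs)!p + zs!p < 0 then 1 else 0)"
  unfolding stat_def by (subst cnt_sum) (simp add: SL_def)

lemma count_abs:
  fixes a :: "nat \<Rightarrow> int" and j k :: int
  assumes "\<forall>p. a p = 0 \<or> a p = 1" "(\<Sum>p<n. a p) = j"
  shows "(\<Sum>p<n. (if j - a p = k then 1 else 0) + (if j - a p + 2 = k then 1 else 0))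
     + (if j = k then 1 else 0) + (if j + 1 = k then 1 else 0)
   = (int n + 1 - j) * (if k = j then 1 else 0) + (int n - j) * (if k = j + 2 then 1 else 0)
     + j * (if k = j - 1 then 1 else 0) + (j + 1) * (if k = j + 1 then 1 else 0)"
proof -
  define c1 where "c1 = (if k = j - 1 then 1 else 0) + (if k = j + 1 then 1 else (0::int))"
  define c0 where "c0 = (if k = j then 1 else 0) + (if k = j + 2 then 1 else (0::int))"
  have pw: "(if j - a p = k then 1 else 0) + (if j - a p + 2 = k then 1 else 0) = a p * c1 + (1 - a p) * c0" for p
    using assms(1)[rule_format, of p] unfolding c1_def c0_def by auto
  have "(\<Sum>p<n. (if j - a p = k then 1 else 0) + (if j - a p + 2 = k then 1 else (0::int)))
      = (\<Sum>p<n. a p) * c1 + (\<Sum>p<n. 1 - a p) * c0"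
    unfolding pw by (simp add: sum.distrib sum_distrib_right)
  also have "\<dots> = j * c1 + (int n - j) * c0" using assms(2) by (simp add: sum_subtractf)
  finally show ?thesis unfolding c1_def c0_def by (auto simp: algebra_simps)
qed

definition fco :: "nat \<Rightarrow> int \<Rightarrow> int \<Rightarrow> int" where
  "fco n j k = (int n + 1 - j) * (if k = j then 1 else 0) + (int n - j) * (if k = j + 2 then 1 else 0)
     + j * (if k = j - 1 then 1 else 0) + (j + 1) * (if k = j + 1 then 1 else 0)"

lemma per_zs:
  assumes "zs \<in> SL n"
  shows "(\<Sum>p<Suc n. \<Sum>s\<in>{1,-1::int}. if stat (ins zs p (s * (int n + 1))) = k then 1 else 0)
    = fco n (stat zs) k"
proof -
  define a where "a p = (if (0#zs)!p + zs!p < 0 then 1 else (0::int))" for p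
  define j where "j = stat zs"
  have aj: "(\<Sum>p<n. a p) = j" using stat_sum[OF assms] by (simp add: a_def j_def)
  have a01: "\<forall>p. a p = 0 \<or> a p = 1" by (simp add: a_def)
  have mid: "(\<Sum>s\<in>{1,-1::int}. if stat (ins zs p (s * (int n + 1))) = k then 1 else 0)
     = (if j - a p = k then 1 else 0) + (if j - a p + 2 = k then 1 else (0::int))" if "p < n" for p
  proof -
    have "stat (ins zs p (int n + 1)) = j - a p" using stat_mid[OF assms that, of "int n + 1"]
      by (simp add: a_def j_def)
    moreover have "stat (ins zs p (- (int n + 1))) = j - a p + 2" using stat_mid[OF assms that, of "- (int n + 1)"]
      by (simp add: a_def j_def)
    ultimately show ?thesis by simp
  qed
  have en: "(\<Sum>s\<in>{1,-1::int}. if stat (ins zs n (s * (int n + 1))) = k then 1 else 0)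
     = (if j = k then 1 else 0) + (if j + 1 = k then 1 else (0::int))"
  proof -
    have "stat (ins zs n (int n + 1)) = j" using stat_end[OF assms, of "int n + 1"] by (simp add: j_def)
    moreover have "stat (ins zs n (- (int n + 1))) = j + 1" using stat_end[OF assms, of "- (int n + 1)"]
      by (simp add: j_def)
    ultimately show ?thesis by simp
  qed
  show ?thesis
    unfolding sum.lessThan_Suc en using sum.cong[OF refl mid, of "{..<n}"] count_abs[OF a01 aj, of k]
    by (simp add: fco_def j_def)
qed

lemma sum3: "(\<Sum>d\<in>A\<times>(B\<times>C). f (case d of (a,b,c) \<Rightarrow> g a b c)) = (\<Sum>a\<in>A. \<Sum>b\<in>B. \<Sum>c\<in>C. (f (g a b c)::int))"
  by (simp add: sum.cartesian_product split_def)

definition BL :: "nat \<Rightarrow> int \<Rightarrow> int" where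
  "BL n k = (\<Sum>zs\<in>SL n. if stat zs = k then 1 else 0)"

lemma BL_rec: "BL (Suc n) k = (\<Sum>zs\<in>SL n. fco n (stat zs) k)"
proof -
  define G where "G = (\<lambda>(zs, p, s). ins zs p (s * (int n + 1)))"
  define D where "D = SL n \<times> ({..<Suc n} \<times> {1,-1::int})"
  have inj: "inj_on G D"
  proof (rule inj_onI)
    fix d1 d2 assume "d1 \<in> D" "d2 \<in> D" "G d1 = G d2"
    moreover obtain zs p s where "d1 = (zs, p, s)" by (cases d1) auto
    moreover obtain zs' p' s' where "d2 = (zs', p', s')" by (cases d2) auto
    ultimately show "d1 = d2" unfolding G_def D_def using ins_inj[of zs n zs' p p' s s'] by simp
  qed
  have img: "G ` D = SL (Suc n)"
  proof
    show "G ` D \<subseteq> SL (Suc n)"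
    proof
      fix y assume "y \<in> G ` D"
      then obtain zs p s where "zs \<in> SL n" "p < Suc n" "s \<in> {1,-1}" "y = ins zs p (s * (int n + 1))"
        unfolding G_def D_def by auto
      then show "y \<in> SL (Suc n)" using SL_ins[of zs n p "s * (int n + 1)"] by (auto simp: abs_mult)
    qed
    show "SL (Suc n) \<subseteq> G ` D"
    proof
      fix ys assume "ys \<in> SL (Suc n)"
      then obtain zs p s where "zs \<in> SL n" "p < Suc n" "s \<in> {1,-1}" "ys = ins zs p (s * (int n + 1))"
        using SL_surj by blast
      then have "(zs, p, s) \<in> D" "ys = G (zs, p, s)" unfolding G_def D_def by auto
      then show "ys \<in> G ` D" by blast
    qed
  qed
  have "BL (Suc n) k = (\<Sum>d\<in>D. if stat (G d) = k then 1 else 0)"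
    unfolding BL_def img[symmetric] by (rule sum.reindex[OF inj, unfolded comp_def])
  also have "\<dots> = (\<Sum>zs\<in>SL n. \<Sum>p<Suc n. \<Sum>s\<in>{1,-1::int}. if stat (ins zs p (s * (int n + 1))) = k then 1 else 0)"
    unfolding D_def G_def by (rule sum3[where f="\<lambda>y. if stat y = k then 1 else 0"])
  also have "\<dots> = (\<Sum>zs\<in>SL n. fco n (stat zs) k)"
    by (rule sum.cong[OF refl]) (rule per_zs)
  finally show ?thesis .
qed

lemma fco_pw: "fco n j k = (int n + 1 - k) * ((if j = k then 1 else 0) + (if j = k - 2 then 1 else 0))
        + k * ((if j = k + 1 then 1 else 0) + (if j = k - 1 then 1 else 0))
        + (if j = k + 1 then 1 else 0) + (if j = k - 2 then 1 else 0)"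
  unfolding fco_def
  by (cases "j = k"; cases "j = k - 2"; cases "j = k + 1"; cases "j = k - 1") (simp_all add: algebra_simps)

lemma BL_rec2: "BL (Suc n) k = (int n + 1 - k) * (BL n k + BL n (k - 2))
         + k * (BL n (k + 1) + BL n (k - 1)) + BL n (k + 1) + BL n (k - 2)"
  unfolding BL_rec fco_pw unfolding BL_def distrib_left sum_distrib_left sum.distrib by simp

lemma card_ind: "finite A \<Longrightarrow> int (card {x\<in>A. P x}) = (\<Sum>x\<in>A. if P x then 1 else 0)"
  by (simp add: sum.inter_filter[symmetric])

lemma sp_facts:
  assumes "\<sigma> \<in> signed_perms n"
  shows "\<sigma> 0 = 0" "\<And>i. i \<in> {- int n..int n} - {0} \<Longrightarrow> \<sigma> i \<in> {- int n..int n} - {0}"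
    "inj_on \<sigma> ({- int n..int n} - {0})" "\<And>i. \<sigma> (- i) = - \<sigma> i"
    "\<And>i. i \<notin> {- int n..int n} \<Longrightarrow> \<sigma> i = i"
proof -
  have b: "bij_betw \<sigma> ({- int n..int n} - {0}) ({- int n..int n} - {0})"
    and o: "\<And>i. \<sigma> (- i) = - \<sigma> i" and e: "\<And>i. i \<notin> {- int n..int n} \<Longrightarrow> \<sigma> i = i"
    using assms by (auto simp: signed_perms_def)
  show "\<sigma> 0 = 0" using o[of 0] by simp
  show "\<And>i. i \<in> {- int n..int n} - {0} \<Longrightarrow> \<sigma> i \<in> {- int n..int n} - {0}"
    using b bij_betwE by blast
  show "inj_on \<sigma> ({- int n..int n} - {0})" using b bij_betw_def by blast
  show "\<And>i. \<sigma> (- i) = - \<sigma> i" by (rule o)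
  show "\<And>i. i \<notin> {- int n..int n} \<Longrightarrow> \<sigma> i = i" by (rule e)
qed

definition Phi :: "nat \<Rightarrow> (int \<Rightarrow> int) \<Rightarrow> int list" where
  "Phi n \<sigma> = map (\<lambda>i. (-1)^i * \<sigma> (int i)) [1..<Suc n]"

lemma Phi_SL:
  assumes "\<sigma> \<in> signed_perms n"
  shows "Phi n \<sigma> \<in> SL n"
proof -
  note F = sp_facts[OF assms]
  have ma: "map abs (Phi n \<sigma>) = map (\<lambda>i. \<bar>\<sigma> (int i)\<bar>) [1..<Suc n]"
    by (simp add: Phi_def abs_mult)
  have inr: "\<sigma> (int i) \<in> {- int n..int n} - {0}" if "i \<in> {1..n}" for i
    using F(2)[of "int i"] that by auto
  have inj: "inj_on (\<lambda>i. \<bar>\<sigma> (int i)\<bar>) {1..n}"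
  proof (rule inj_onI)
    fix i i' assume i: "i \<in> {1..n}" "i' \<in> {1..n}" "\<bar>\<sigma> (int i)\<bar> = \<bar>\<sigma> (int i')\<bar>"
    then have "\<sigma> (int i) = \<sigma> (int i') \<or> \<sigma> (int i) = \<sigma> (- int i')" using F(4) by (auto simp: abs_eq_iff)
    moreover have "int i \<in> {- int n..int n} - {0}" "int i' \<in> {- int n..int n} - {0}"
      "- int i' \<in> {- int n..int n} - {0}" using i by auto
    ultimately have "int i = int i' \<or> int i = - int i'" using F(3) by (meson inj_onD)
    then show "i = i'" using i by auto
  qed
  have su: "set [1..<Suc n] = {1..n}" by auto
  have d: "distinct (map abs (Phi n \<sigma>))" unfolding ma distinct_map su
    using inj by (simp del: upt_Suc)
  have sub: "set (map abs (Phi n \<sigma>)) \<subseteq> {1..int n}" unfolding ma using inr by force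
  have "card (set (map abs (Phi n \<sigma>))) = n" using distinct_card[OF d] by (simp add: Phi_def)
  then have "set (map abs (Phi n \<sigma>)) = {1..int n}" using card_subset_eq[OF _ sub] by simp
  moreover have "length (Phi n \<sigma>) = n" by (simp add: Phi_def)
  ultimately show ?thesis using d unfolding SL_def by blast
qed

lemma Phi_stat:
  assumes "\<sigma> \<in> signed_perms n"
  shows "stat (Phi n \<sigma>) = int (alt_des_B n \<sigma>)"
proof -
  have z: "0 # Phi n \<sigma> = map (\<lambda>i. (-1)^i * \<sigma> (int i)) [0..<Suc n]"
    using sp_facts(1)[OF assms] by (simp add: Phi_def upt_conv_Cons del: upt_Suc)
  have "stat (Phi n \<sigma>) = (\<Sum>i<n. if (-1)^i * \<sigma> (int i) + (-1)^Suc i * \<sigma> (int (Suc i)) < 0 then 1 else 0)"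
    unfolding stat_def cnt_sum z by (intro sum.cong) (auto simp del: upt_Suc simp: nth_append)
  also have "\<dots> = (\<Sum>i<n. if is_alt_des \<sigma> i then 1 else 0)"
  proof (intro sum.cong refl)
    fix i
    have "((-1)^i * \<sigma> (int i) + (-1)^Suc i * \<sigma> (int (Suc i)) < 0) = is_alt_des \<sigma> i"
      by (cases "even i") (auto simp: is_alt_des_def add.commute neg_one_even_power neg_one_odd_power)
    then show "(if (-1)^i * \<sigma> (int i) + (-1)^Suc i * \<sigma> (int (Suc i)) < 0 then 1 else (0::int))
      = (if is_alt_des \<sigma> i then 1 else 0)" by simp
  qed
  also have "\<dots> = int (alt_des_B n \<sigma>)"
    unfolding alt_des_B_def by (subst card_ind) (auto simp: lessThan_atLeast0)
  finally show ?thesis .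
qed

lemma Phi_nth: "i < n \<Longrightarrow> Phi n \<sigma> ! i = (-1)^Suc i * \<sigma> (int (Suc i))"
  by (simp add: Phi_def del: upt_Suc)

lemma Phi_inj: "inj_on (Phi n) (signed_perms n)"
proof (rule inj_onI)
  fix \<sigma> \<tau> assume s: "\<sigma> \<in> signed_perms n" and t: "\<tau> \<in> signed_perms n" and e: "Phi n \<sigma> = Phi n \<tau>"
  have pos: "\<sigma> (int m) = \<tau> (int m)" if "1 \<le> m" "m \<le> n" for m
  proof -
    have "Phi n \<sigma> ! (m - 1) = Phi n \<tau> ! (m - 1)" using e by simp
    then have "(-1)^m * \<sigma> (int m) = (-1)^m * \<tau> (int m)" using that Phi_nth[of "m - 1" n] by simp
    then show ?thesis by simp
  qed
  show "\<sigma> = \<tau>"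
  proof
    fix i
    show "\<sigma> i = \<tau> i"
    proof (cases "i \<in> {- int n..int n}")
      case False then show ?thesis using sp_facts(5)[OF s] sp_facts(5)[OF t] by simp
    next
      case True
      consider "i = 0" | "1 \<le> i" | "i \<le> -1" by linarith
      then show ?thesis
      proof cases
        case 1 then show ?thesis using sp_facts(1)[OF s] sp_facts(1)[OF t] by simp
      next
        case 2
        then show ?thesis using pos[of "nat i"] 2 True by simp
      next
        case 3
        have "\<sigma> (- i) = \<tau> (- i)" using pos[of "nat (- i)"] 3 True by simp
        then show ?thesis using sp_facts(4)[OF s, of "- i"] sp_facts(4)[OF t, of "- i"] by simp
      qed
    qed
  qed
qed

lemma Phi_surj:
  assumes zs: "zs \<in> SL n"
  shows "\<exists>\<sigma>\<in>signed_perms n. Phi n \<sigma> = zs"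
proof -
  define A where "A = {- int n..int n} - {0}"
  define h where "h m = (-1)^m * zs!(m-1)" for m :: nat
  define \<sigma> where "\<sigma> i = (if 1 \<le> i \<and> i \<le> int n then h (nat i)
     else if - int n \<le> i \<and> i \<le> -1 then - h (nat (-i)) else i)" for i
  have l: "length zs = n" and d: "distinct (map abs zs)" using zs by (auto simp: SL_def)
  have habs: "\<bar>\<sigma> i\<bar> = \<bar>zs ! (nat \<bar>i\<bar> - 1)\<bar>" if "i \<in> A" for i
    using that by (auto simp: \<sigma>_def h_def A_def abs_mult)
  have zin: "zs ! (nat \<bar>i\<bar> - 1) \<in> set zs" if "i \<in> A" for i
    using that l by (auto simp: A_def)
  have odd: "\<sigma> (- i) = - \<sigma> i" for i
    by (auto simp: \<sigma>_def)
  have out: "\<sigma> i = i" if "i \<notin> {- int n..int n}" for i using that by (auto simp: \<sigma>_def)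
  have into: "\<sigma> ` A \<subseteq> A"
  proof
    fix y assume "y \<in> \<sigma> ` A"
    then obtain i where i: "i \<in> A" "y = \<sigma> i" by blast
    have "1 \<le> \<bar>\<sigma> i\<bar> \<and> \<bar>\<sigma> i\<bar> \<le> int n" using habs[OF i(1)] SL_abs[OF zs zin[OF i(1)]] by simp
    then show "y \<in> A" using i(2) unfolding A_def by (auto simp: abs_le_iff)
  qed
  have inj: "inj_on \<sigma> A"
  proof (rule inj_onI)
    fix i j assume i: "i \<in> A" and j: "j \<in> A" and e: "\<sigma> i = \<sigma> j"
    have ii: "nat \<bar>i\<bar> - 1 < n" "nat \<bar>j\<bar> - 1 < n" using i j by (auto simp: A_def)
    have "(map abs zs) ! (nat \<bar>i\<bar> - 1) = (map abs zs) ! (nat \<bar>j\<bar> - 1)"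
      using habs[OF i] habs[OF j] e ii l by simp
    then have "nat \<bar>i\<bar> - 1 = nat \<bar>j\<bar> - 1"
      using nth_eq_iff_index_eq[OF d] i j l by (auto simp: A_def)
    then have "\<bar>i\<bar> = \<bar>j\<bar>" using i j by (auto simp: A_def)
    then have "j = i \<or> j = - i" by (auto simp: abs_eq_iff)
    moreover have "\<sigma> i \<noteq> 0" using habs[OF i] SL_abs[OF zs zin[OF i]] by auto
    ultimately show "i = j" using e odd[of i] by auto
  qed
  have "bij_betw \<sigma> A A" unfolding bij_betw_def using inj endo_inj_surj[OF _ into inj] by (simp add: A_def)
  then have S: "\<sigma> \<in> signed_perms n" using odd out by (simp add: signed_perms_def A_def)
  have "Phi n \<sigma> = zs"
  proof (rule nth_equalityI)
    show "length (Phi n \<sigma>) = length zs" using l by (simp add: Phi_def)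
    fix i assume "i < length (Phi n \<sigma>)"
    then have i: "i < n" by (simp add: Phi_def del: upt_Suc)
    have "nat (1 + int i) = Suc i" by simp
    then have "\<sigma> (int (Suc i)) = h (Suc i)" using i by (simp add: \<sigma>_def)
    then have "Phi n \<sigma> ! i = (-1)^Suc i * ((-1)^Suc i * zs ! i)" using Phi_nth[OF i] by (simp add: h_def)
    also have "\<dots> = zs ! i" by (simp add: mult.assoc[symmetric] power_mult_distrib[symmetric])
    finally show "Phi n \<sigma> ! i = zs ! i" .
  qed
  then show ?thesis using S by blast
qed

lemma Bhat_BL: "Bhat n k = BL n k"
proof -
  have "Phi n ` {\<sigma> \<in> signed_perms n. int (alt_des_B n \<sigma>) = k} = {zs \<in> SL n. stat zs = k}"
  proof
    show "Phi n ` {\<sigma> \<in> signed_perms n. int (alt_des_B n \<sigma>) = k} \<subseteq> {zs \<in> SL n. stat zs = k}"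
      using Phi_SL Phi_stat by auto
    show "{zs \<in> SL n. stat zs = k} \<subseteq> Phi n ` {\<sigma> \<in> signed_perms n. int (alt_des_B n \<sigma>) = k}"
    proof
      fix zs assume "zs \<in> {zs \<in> SL n. stat zs = k}"
      then obtain \<sigma> where s: "\<sigma> \<in> signed_perms n" "Phi n \<sigma> = zs" "stat zs = k" using Phi_surj by blast
      then have "int (alt_des_B n \<sigma>) = k" using Phi_stat[OF s(1)] by simp
      then have "\<sigma> \<in> {\<sigma> \<in> signed_perms n. int (alt_des_B n \<sigma>) = k}" using s(1) by simp
      then show "zs \<in> Phi n ` {\<sigma> \<in> signed_perms n. int (alt_des_B n \<sigma>) = k}"
        using s(2) by blast
    qed
  qed
  moreover have "inj_on (Phi n) {\<sigma> \<in> signed_perms n. int (alt_des_B n \<sigma>) = k}"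
    using Phi_inj by (rule inj_on_subset) auto
  ultimately have "card {\<sigma> \<in> signed_perms n. int (alt_des_B n \<sigma>) = k} = card {zs \<in> SL n. stat zs = k}"
    using card_image by fastforce
  then show ?thesis unfolding Bhat_def BL_def
    using card_ind[OF finite_SL, of n "\<lambda>zs. stat zs = k"] by simp
qed

definition Ng :: "nat \<Rightarrow> (int \<Rightarrow> int) \<Rightarrow> int \<Rightarrow> int" where
  "Ng n \<sigma> i = (if i \<in> {- int n..int n} then - \<sigma> i else i)"

lemma Ng_SP:
  assumes s: "\<sigma> \<in> signed_perms n"
  shows "Ng n \<sigma> \<in> signed_perms n"
proof -
  define A where "A = {- int n..int n} - {0}"
  have b: "bij_betw \<sigma> A A" using s by (simp add: signed_perms_def A_def)
  have uA: "uminus ` A \<subseteq> A" unfolding A_def by auto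
  have u: "bij_betw uminus A A"
    by (rule bij_betw_byWitness[where f'=uminus]) (simp_all add: uA)
  have "bij_betw (uminus \<circ> \<sigma>) A A" using bij_betw_trans[OF b u] .
  moreover have "\<forall>i\<in>A. (uminus \<circ> \<sigma>) i = Ng n \<sigma> i" unfolding A_def Ng_def by simp
  ultimately have "bij_betw (Ng n \<sigma>) A A" using bij_betw_cong by metis
  moreover have "\<forall>i. Ng n \<sigma> (- i) = - Ng n \<sigma> i"
  proof
    fix i
    have "(- i \<in> {- int n..int n}) = (i \<in> {- int n..int n})" by auto
    then show "Ng n \<sigma> (- i) = - Ng n \<sigma> i" using sp_facts(4)[OF s, of i] unfolding Ng_def by simp
  qed
  moreover have "\<forall>i. i \<notin> {- int n..int n} \<longrightarrow> Ng n \<sigma> i = i" by (simp add: Ng_def)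
  ultimately show ?thesis unfolding signed_perms_def A_def by blast
qed

lemma Ng_Ng: assumes s: "\<sigma> \<in> signed_perms n" shows "Ng n (Ng n \<sigma>) = \<sigma>"
proof
  fix i show "Ng n (Ng n \<sigma>) i = \<sigma> i"
    using sp_facts(5)[OF s, of i] by (cases "i \<in> {- int n..int n}") (simp_all add: Ng_def)
qed

lemma alt0_iff:
  assumes s: "\<sigma> \<in> signed_perms n" and n: "n \<ge> 1"
  shows "alt_des_B n \<sigma> = 0 \<longleftrightarrow> Ng n \<sigma> \<in> snakes n"
proof -
  note F = sp_facts[OF s]
  have a0: "alt_des_B n \<sigma> = 0 \<longleftrightarrow> (\<forall>i<n. \<not> is_alt_des \<sigma> i)"
    unfolding alt_des_B_def by auto
  have inA: "int i \<in> {- int n..int n} - {0}" if "1 \<le> i" "i \<le> n" for i using that by auto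
  have ne: "\<sigma> (int i) \<noteq> \<sigma> (int i + 1)" if "1 \<le> i" "i < n" for i
  proof
    assume e: "\<sigma> (int i) = \<sigma> (int i + 1)"
    have m: "int i \<in> {- int n..int n} - {0}" "int i + 1 \<in> {- int n..int n} - {0}"
      using that by auto
    have "int i = int i + 1" by (rule inj_onD[OF F(3) e m])
    then show False by simp
  qed
  have s1: "\<sigma> 1 \<noteq> 0" using F(2)[OF inA[of 1]] n by auto
  have Ngv: "Ng n \<sigma> (int i) = - \<sigma> (int i)" if "i \<le> n" for i using that by (simp add: Ng_def)
  have Ngv1: "Ng n \<sigma> (int i + 1) = - \<sigma> (int i + 1)" if "i < n" for i using that by (simp add: Ng_def)
  have Ng1: "Ng n \<sigma> 1 = - \<sigma> 1" using n by (simp add: Ng_def)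
  show ?thesis
  proof
    assume "alt_des_B n \<sigma> = 0"
    then have nd: "\<And>i. i < n \<Longrightarrow> \<not> is_alt_des \<sigma> i" using a0 by blast
    have "\<not> is_alt_des \<sigma> 0" using nd n by simp
    then have "Ng n \<sigma> 1 > 0" using F(1) s1 Ng1 by (simp add: is_alt_des_def)
    moreover have "(odd i \<longrightarrow> Ng n \<sigma> (int i) > Ng n \<sigma> (int i + 1)) \<and> (even i \<longrightarrow> Ng n \<sigma> (int i) < Ng n \<sigma> (int i + 1))"
      if "1 \<le> i" "i < n" for i
    proof -
      have "i \<le> n" using that by simp
      from nd[OF that(2)] ne[OF that] Ngv[OF this] Ngv1[OF that(2)]
      show ?thesis unfolding is_alt_des_def by auto
    qed
    ultimately show "Ng n \<sigma> \<in> snakes n" using Ng_SP[OF s] by (simp add: snakes_def)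
  next
    assume sn: "Ng n \<sigma> \<in> snakes n"
    have t1: "Ng n \<sigma> 1 > 0" using sn by (simp add: snakes_def)
    have sc: "\<And>i. 1 \<le> i \<Longrightarrow> i < n \<Longrightarrow> (odd i \<longrightarrow> Ng n \<sigma> (int i) > Ng n \<sigma> (int i + 1))
       \<and> (even i \<longrightarrow> Ng n \<sigma> (int i) < Ng n \<sigma> (int i + 1))"
      using sn unfolding snakes_def by blast
    have "\<not> is_alt_des \<sigma> i" if "i < n" for i
    proof (cases "i = 0")
      case True
      then show ?thesis using t1 F(1) Ng1 by (simp add: is_alt_des_def)
    next
      case False
      then have i1: "1 \<le> i" by simp
      have "i \<le> n" using that by simp
      from sc[OF i1 that] Ngv[OF this] Ngv1[OF that]
      show ?thesis unfolding is_alt_des_def by auto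
    qed
    then show "alt_des_B n \<sigma> = 0" using a0 by blast
  qed
qed

lemma Bhat0: "n \<ge> 1 \<Longrightarrow> Bhat n 0 = S_num n"
proof -
  assume n: "n \<ge> 1"
  have "bij_betw (Ng n) {\<sigma> \<in> signed_perms n. int (alt_des_B n \<sigma>) = 0} (snakes n)"
  proof (rule bij_betw_byWitness[where f'="Ng n"])
    show "\<forall>a\<in>{\<sigma> \<in> signed_perms n. int (alt_des_B n \<sigma>) = 0}. Ng n (Ng n a) = a" using Ng_Ng by blast
    show "\<forall>a\<in>snakes n. Ng n (Ng n a) = a" using Ng_Ng by (auto simp: snakes_def)
    show "Ng n ` {\<sigma> \<in> signed_perms n. int (alt_des_B n \<sigma>) = 0} \<subseteq> snakes n"
      using alt0_iff n by auto
    show "Ng n ` snakes n \<subseteq> {\<sigma> \<in> signed_perms n. int (alt_des_B n \<sigma>) = 0}"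
    proof
      fix y assume "y \<in> Ng n ` snakes n"
      then obtain t where t: "t \<in> snakes n" "y = Ng n t" by blast
      then have tS: "t \<in> signed_perms n" by (simp add: snakes_def)
      then have yS: "y \<in> signed_perms n" using t Ng_SP by simp
      have "Ng n y \<in> snakes n" using t Ng_Ng[OF tS] by simp
      then have "alt_des_B n y = 0" using alt0_iff[OF yS n] by simp
      then show "y \<in> {\<sigma> \<in> signed_perms n. int (alt_des_B n \<sigma>) = 0}" using yS by simp
    qed
  qed
  then have "card {\<sigma> \<in> signed_perms n. int (alt_des_B n \<sigma>) = 0} = card (snakes n)"
    by (rule bij_betw_same_card)
  then show ?thesis unfolding Bhat_def S_num_def by simp
qed

theorem proposition3p2:
  shows "(\<forall>n::nat. n \<ge> 1 \<longrightarrow> Bhat n 0 = S_num n) \<and>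
    (\<forall>n::nat. \<forall>k::int. n \<ge> 1 \<longrightarrow>
       Bhat (n + 1) k =
         (int n + 1 - k) * (Bhat n k + Bhat n (k - 2))
         + k * (Bhat n (k + 1) + Bhat n (k - 1))
         + Bhat n (k + 1) + Bhat n (k - 2))"
  using Bhat0 BL_rec2 by (simp add: Bhat_BL)

end
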